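(* Consider shadow estimation with uniform sampling from the local Clifford group $\mathrm{Cl}_1^{\times n}$ with noise channels $\Lambda(g_1,\dots,g_n)$ for each $(g_1,\dots,g_n)\in\mathrm{Cl}_1^{\times n}$. Then the noisy frame operator $\tilde S=\mathbb{E}_{g}[\omega(g)^\dagger M\omega(g)\Lambda(g)]$ ($g$ uniform) is $$\tilde S=\sum_{a\in\mathbb{F}_2^{2n}}\frac1{3^{|\mathrm{supp}(a)|}}|\hat\sigma_a)(\hat\sigma_a|\,\bar\Lambda_a,$$ where $\bar\Lambda_a=\mathbb{E}_{g_1\in G(a_1)}\cdots\mathbb{E}_{g_n\in G(a_n)}\Lambda(g_1,\dots,g_n)$. If the noise is local, i.e. $\Lambda(g_1,\dots,g_n)=\bigotimes_{i=1}^n\Lambda^{(i)}(g_i)$, then $\bar\Lambda_a=\bigotimes_{i=1}^n\mathbb{E}_{g_i\in G(a_i)}\Lambda^{(i)}(g_i)$.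
   Context: $d=2^n$; $(A|B)=\mathrm{Tr}(A^\dagger B)$; $|A)(B|$ is $C\mapsto(B|C)A$; $\omega(g)(A)=gAg^\dagger$, $\omega(g)^\dagger(A)=g^\dagger Ag$; for $g=g_1\otimes\cdots\otimes g_n$, $\omega(g)=\bigotimes_i\omega(g_i)$. $M=\sum_{x\in\mathbb{F}_2^n}|E_x)(E_x|$ with $E_x=|x\rangle\langle x|$. Single-qubit Paulis $\sigma_{00}=\mathbb 1,\sigma_{01}=X,\sigma_{11}=Y,\sigma_{10}=Z$; for $a=(a_1,\dots,a_n)$, $a_i\in\mathbb{F}_2^2$, $\sigma_a=\bigotimes_i\sigma_{a_i}$, $\hat\sigma_a=\sigma_a/\sqrt d$, $|\mathrm{supp}(a)|=|\{i:a_i\ne0\}|$. $\mathrm{Cl}_1$ is the single-qubit Clifford group, $\mathrm{St}(Z)=\{h\in\mathrm{Cl}_1:\omega(h)^\dagger|Z)(Z|\omega(h)=|Z)(Z|\}$, and for $a\in\mathbb{F}_2^2\setminus\{0\}$, $g_a\in\mathrm{Cl}_1$ is an element with $\omega(g_a)^\dagger|Z)(Z|\omega(g_a)=|\sigma_a)(\sigma_a|$. $G(a)=\mathrm{Cl}_1$ if $a=0$ and $G(a)=\mathrm{St}(Z)g_a=\{hg_a:h\in\mathrm{St}(Z)\}$ if $a\ne0$. Expectations over $G(a_i)$ are uniform averages. *)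

theory Defs
  imports Complex_Main
begin

text \<open>A single-qubit operator is a 2x2 complex matrix indexed by bool (False = |0>, True = |1>).
An n-qubit operator is a matrix indexed by bit strings (bool lists); only entries indexed by
lists of length n are meaningful (all sums range over such lists).\<close>

type_synonym op1 = "bool \<Rightarrow> bool \<Rightarrow> complex"
type_synonym sop1 = "op1 \<Rightarrow> op1"
type_synonym op = "bool list \<Rightarrow> bool list \<Rightarrow> complex"
type_synonym sop = "op \<Rightarrow> op"

definition basis :: "nat \<Rightarrow> bool list set" where
  "basis n = {x. length x = n}"

definition munit1 :: "bool \<Rightarrow> bool \<Rightarrow> op1" where
  "munit1 x y = (\<lambda>u v. if u = x \<and> v = y then 1 else 0)"

definition munit :: "bool list \<Rightarrow> bool list \<Rightarrow> op" where
  "munit x y = (\<lambda>u v. if u = x \<and> v = y then 1 else 0)"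

definition hs1 :: "op1 \<Rightarrow> op1 \<Rightarrow> complex" where
  "hs1 A B = (\<Sum>x\<in>UNIV. \<Sum>y\<in>UNIV. cnj (A x y) * B x y)"

definition hs :: "nat \<Rightarrow> op \<Rightarrow> op \<Rightarrow> complex" where
  "hs n A B = (\<Sum>x\<in>basis n. \<Sum>y\<in>basis n. cnj (A x y) * B x y)"

definition ketbra1 :: "op1 \<Rightarrow> op1 \<Rightarrow> sop1" where
  "ketbra1 A B = (\<lambda>C u v. hs1 B C * A u v)"

definition ketbra :: "nat \<Rightarrow> op \<Rightarrow> op \<Rightarrow> sop" where
  "ketbra n A B = (\<lambda>C u v. hs n B C * A u v)"

definition sadj1 :: "sop1 \<Rightarrow> sop1" where
  "sadj1 \<Phi> = (\<lambda>B u v. \<Sum>x\<in>UNIV. \<Sum>y\<in>UNIV. hs1 (\<Phi> (munit1 x y)) B * munit1 x y u v)"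

definition sadj :: "nat \<Rightarrow> sop \<Rightarrow> sop" where
  "sadj n \<Phi> = (\<lambda>B u v. \<Sum>x\<in>basis n. \<Sum>y\<in>basis n. hs n (\<Phi> (munit x y)) B * munit x y u v)"

definition mmul1 :: "op1 \<Rightarrow> op1 \<Rightarrow> op1" where
  "mmul1 A B = (\<lambda>x y. \<Sum>z\<in>UNIV. A x z * B z y)"

definition dagger1 :: "op1 \<Rightarrow> op1" where
  "dagger1 U = (\<lambda>x y. cnj (U y x))"

definition id1 :: op1 where
  "id1 = (\<lambda>x y. if x = y then 1 else 0)"

definition unitary1 :: "op1 \<Rightarrow> bool" where
  "unitary1 U \<longleftrightarrow> mmul1 U (dagger1 U) = id1 \<and> mmul1 (dagger1 U) U = id1"

definition omega1 :: "op1 \<Rightarrow> sop1" where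
  "omega1 U = (\<lambda>A. mmul1 (mmul1 U A) (dagger1 U))"

text \<open>sigma_00 = 1, sigma_01 = X, sigma_11 = Y, sigma_10 = Z; an element of F_2^2 is a pair of bools.\<close>
definition pauli1 :: "bool \<times> bool \<Rightarrow> op1" where
  "pauli1 a = (case a of
      (False, False) \<Rightarrow> id1
    | (False, True) \<Rightarrow> (\<lambda>x y. if x \<noteq> y then 1 else 0)
    | (True, True) \<Rightarrow> (\<lambda>x y. if \<not> x \<and> y then - \<i> else if x \<and> \<not> y then \<i> else 0)
    | (True, False) \<Rightarrow> (\<lambda>x y. if x = y then (if x then -1 else 1) else 0))"

abbreviation pauliZ :: op1 where "pauliZ \<equiv> pauli1 (True, False)"

definition clifford_unitary1 :: "op1 \<Rightarrow> bool" where
  "clifford_unitary1 U \<longleftrightarrow> unitary1 U \<and>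
     (\<forall>a. \<exists>b c. omega1 U (pauli1 a) = (\<lambda>x y. c * pauli1 b x y))"

text \<open>The single-qubit Clifford group Cl_1, taken modulo global phases: an element g is
identified with its adjoint action omega(g). Hence Cl1 is a finite set of superoperators,
and omega(g) = g for g in Cl1.\<close>
definition Cl1 :: "sop1 set" where
  "Cl1 = omega1 ` {U. clifford_unitary1 U}"

definition StZ :: "sop1 set" where
  "StZ = {h \<in> Cl1. sadj1 h \<circ> ketbra1 pauliZ pauliZ \<circ> h = ketbra1 pauliZ pauliZ}"

text \<open>G(a) = Cl_1 if a = 0, and St(Z) g_a otherwise (product hg corresponds to
omega(h) o omega(g)).\<close>
definition Gset :: "(bool \<times> bool \<Rightarrow> sop1) \<Rightarrow> bool \<times> bool \<Rightarrow> sop1 set" where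
  "Gset ga a = (if a = (False, False) then Cl1 else (\<lambda>h. h \<circ> ga a) ` StZ)"

definition ktensor :: "op1 list \<Rightarrow> op" where
  "ktensor ms = (\<lambda>x y. \<Prod>i<length ms. (ms ! i) (x ! i) (y ! i))"

definition stensor :: "sop1 list \<Rightarrow> sop" where
  "stensor \<Phi>s = (\<lambda>A u v. \<Sum>x\<in>basis (length \<Phi>s). \<Sum>y\<in>basis (length \<Phi>s).
      A x y * ktensor (map (\<lambda>i. (\<Phi>s ! i) (munit1 (x ! i) (y ! i))) [0..<length \<Phi>s]) u v)"

definition pauli :: "(bool \<times> bool) list \<Rightarrow> op" where
  "pauli a = ktensor (map pauli1 a)"

definition npauli :: "(bool \<times> bool) list \<Rightarrow> op" where
  "npauli a = (\<lambda>x y. pauli a x y / complex_of_real (sqrt (2 ^ length a)))"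

definition supp_size :: "(bool \<times> bool) list \<Rightarrow> nat" where
  "supp_size a = length (filter (\<lambda>ai. ai \<noteq> (False, False)) a)"

definition pauli_labels :: "nat \<Rightarrow> (bool \<times> bool) list set" where
  "pauli_labels n = {a. length a = n}"

definition Mmeas :: "nat \<Rightarrow> sop" where
  "Mmeas n = (\<lambda>A u v. \<Sum>x\<in>basis n. ketbra n (munit x x) (munit x x) A u v)"

definition ClN :: "nat \<Rightarrow> sop1 list set" where
  "ClN n = {gs. length gs = n \<and> set gs \<subseteq> Cl1}"

definition savg :: "'g set \<Rightarrow> ('g \<Rightarrow> ('a \<Rightarrow> 'b \<Rightarrow> 'c \<Rightarrow> complex)) \<Rightarrow> 'a \<Rightarrow> 'b \<Rightarrow> 'c \<Rightarrow> complex" where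
  "savg S F = (\<lambda>A u v. (\<Sum>g\<in>S. F g A u v) / of_nat (card S))"

definition noisy_frame :: "nat \<Rightarrow> (sop1 list \<Rightarrow> sop) \<Rightarrow> sop" where
  "noisy_frame n \<Lambda> = savg (ClN n)
     (\<lambda>gs. sadj n (stensor gs) \<circ> Mmeas n \<circ> stensor gs \<circ> \<Lambda> gs)"

text \<open>bar Lambda_a = E_{g1 in G(a1)} ... E_{gn in G(an)} Lambda(g1,...,gn)
(iterated uniform averages = uniform average over the product set).\<close>
definition Gprod :: "(bool \<times> bool \<Rightarrow> sop1) \<Rightarrow> (bool \<times> bool) list \<Rightarrow> sop1 list set" where
  "Gprod ga a = {gs. length gs = length a \<and> (\<forall>i<length a. gs ! i \<in> Gset ga (a ! i))}"

definition Lambda_bar :: "(bool \<times> bool \<Rightarrow> sop1) \<Rightarrow> (sop1 list \<Rightarrow> sop) \<Rightarrow> (bool \<times> bool) list \<Rightarrow> sop" where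
  "Lambda_bar ga \<Lambda> a = savg (Gprod ga a) \<Lambda>"

definition trace_n :: "nat \<Rightarrow> op \<Rightarrow> complex" where
  "trace_n n A = (\<Sum>x\<in>basis n. A x x)"

definition quantum_channel :: "nat \<Rightarrow> sop \<Rightarrow> bool" where
  "quantum_channel n \<Phi> \<longleftrightarrow>
     \<comment> \<open>only depends on the meaningful entries\<close>
     (\<forall>A B. (\<forall>x\<in>basis n. \<forall>y\<in>basis n. A x y = B x y) \<longrightarrow>
        (\<forall>u\<in>basis n. \<forall>v\<in>basis n. \<Phi> A u v = \<Phi> B u v)) \<and>
     \<comment> \<open>linear\<close>
     (\<forall>A B c. \<forall>u\<in>basis n. \<forall>v\<in>basis n.
        \<Phi> (\<lambda>x y. A x y + c * B x y) u v = \<Phi> A u v + c * \<Phi> B u v) \<and>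
     \<comment> \<open>trace preserving\<close>
     (\<forall>A. trace_n n (\<Phi> A) = trace_n n A) \<and>
     \<comment> \<open>completely positive: the Choi matrix is positive semidefinite\<close>
     (\<forall>w :: bool list \<Rightarrow> bool list \<Rightarrow> complex.
        let q = (\<Sum>x\<in>basis n. \<Sum>u\<in>basis n. \<Sum>y\<in>basis n. \<Sum>v\<in>basis n.
                   cnj (w x u) * \<Phi> (munit x y) u v * w y v)
        in Im q = 0 \<and> Re q \<ge> 0)"

end

theory Submission
  imports Defs
begin

definition listset :: "nat \<Rightarrow> (nat \<Rightarrow> 'a set) \<Rightarrow> 'a list set" where
  "listset n S = {xs. length xs = n \<and> (\<forall>i<n. xs ! i \<in> S i)}"

lemma listset_0: "listset 0 S = {[]}"
  by (auto simp: listset_def)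

lemma listset_Suc: "listset (Suc n) S = (\<lambda>(x,xs). x#xs) ` (S 0 \<times> listset n (\<lambda>i. S (Suc i)))"
proof (intro set_eqI iffI)
  fix ys assume "ys \<in> listset (Suc n) S"
  then obtain x xs where ys: "ys = x # xs" "length xs = n" and h: "\<forall>i<Suc n. ys ! i \<in> S i"
    by (auto simp: listset_def length_Suc_conv)
  have "x \<in> S 0" using h ys by force
  moreover have "xs \<in> listset n (\<lambda>i. S (Suc i))" using h ys by (auto simp: listset_def)
  ultimately show "ys \<in> (\<lambda>(x,xs). x#xs) ` (S 0 \<times> listset n (\<lambda>i. S (Suc i)))" using ys by auto
next
  fix ys assume "ys \<in> (\<lambda>(x,xs). x#xs) ` (S 0 \<times> listset n (\<lambda>i. S (Suc i)))"
  then show "ys \<in> listset (Suc n) S"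
    by (auto simp: listset_def less_Suc_eq_0_disj)
qed

lemma finite_listset: "(\<forall>i<n. finite (S i)) \<Longrightarrow> finite (listset n S)"
proof (induction n arbitrary: S)
  case 0 then show ?case by (simp add: listset_0)
next
  case (Suc n) then show ?case by (simp add: listset_Suc)
qed

lemma sum_prod_listset:
  fixes f :: "nat \<Rightarrow> 'a \<Rightarrow> 'b::comm_semiring_1"
  shows "(\<forall>i<n. finite (S i)) \<Longrightarrow>
    (\<Sum>xs\<in>listset n S. \<Prod>i<n. f i (xs!i)) = (\<Prod>i<n. \<Sum>x\<in>S i. f i x)"
proof (induction n arbitrary: S f)
  case 0 then show ?case by (simp add: listset_0)
next
  case (Suc n)
  have inj: "inj_on (\<lambda>(x,xs). x#xs) (S 0 \<times> listset n (\<lambda>i. S (Suc i)))"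
    by (auto simp: inj_on_def)
  have "(\<Sum>xs\<in>listset (Suc n) S. \<Prod>i<Suc n. f i (xs!i))
      = (\<Sum>(x,xs)\<in>S 0 \<times> listset n (\<lambda>i. S (Suc i)). f 0 x * (\<Prod>i<n. f (Suc i) (xs!i)))"
    unfolding listset_Suc by (subst sum.reindex[OF inj]) (simp add: case_prod_unfold prod.lessThan_Suc_shift del: prod.lessThan_Suc)
  also have "\<dots> = (\<Sum>x\<in>S 0. \<Sum>xs\<in>listset n (\<lambda>i. S (Suc i)). f 0 x * (\<Prod>i<n. f (Suc i) (xs!i)))"
    by (simp add: sum.cartesian_product)
  also have "\<dots> = (\<Sum>x\<in>S 0. f 0 x) * (\<Sum>xs\<in>listset n (\<lambda>i. S (Suc i)). \<Prod>i<n. f (Suc i) (xs!i))"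
    by (simp only: sum_product)
  also have "\<dots> = (\<Sum>x\<in>S 0. f 0 x) * (\<Prod>i<n. \<Sum>x\<in>S (Suc i). f (Suc i) x)"
    using Suc.IH[of "\<lambda>i. S (Suc i)" "\<lambda>i. f (Suc i)"] Suc.prems by simp
  also have "\<dots> = (\<Prod>i<Suc n. \<Sum>x\<in>S i. f i x)"
    by (simp only: prod.lessThan_Suc_shift)
  finally show ?case .
qed



lemma sumB: "(\<Sum>x\<in>(UNIV::bool set). f x) = f False + f True"
  by (simp add: UNIV_bool)

lemmas bsimps = mmul1_def dagger1_def id1_def omega1_def sumB

lemma mmul1_assoc: "mmul1 (mmul1 A B) C = mmul1 A (mmul1 B C)"
  by (rule ext, rule ext) (simp add: bsimps algebra_simps)

lemma dagger1_mmul1: "dagger1 (mmul1 A B) = mmul1 (dagger1 B) (dagger1 A)"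
  by (rule ext, rule ext) (simp add: bsimps algebra_simps)

lemma dagger1_dagger1[simp]: "dagger1 (dagger1 A) = A"
  by (simp add: dagger1_def)

lemma dagger1_id1[simp]: "dagger1 id1 = id1"
  by (rule ext, rule ext) (simp add: bsimps)

lemma mmul1_id1[simp]: "mmul1 id1 A = A" "mmul1 A id1 = A"
  by (rule ext, rule ext, simp add: bsimps)+

lemma omega1_comp: "omega1 U (omega1 V A) = omega1 (mmul1 U V) A"
  by (simp add: omega1_def dagger1_mmul1 mmul1_assoc)

lemma omega1_inv:
  assumes "unitary1 U"
  shows "omega1 (dagger1 U) (omega1 U A) = A" "omega1 U (omega1 (dagger1 U) A) = A"
  using assms by (simp_all add: omega1_comp unitary1_def, simp_all add: omega1_def mmul1_assoc)

lemma unitary1_dagger: "unitary1 U \<Longrightarrow> unitary1 (dagger1 U)"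
  by (simp add: unitary1_def)

lemma unitary1_mmul: "unitary1 U \<Longrightarrow> unitary1 V \<Longrightarrow> unitary1 (mmul1 U V)"
  unfolding unitary1_def dagger1_mmul1
  by (metis mmul1_assoc mmul1_id1)

lemma omega1_scale: "omega1 U (\<lambda>x y. c * A x y) = (\<lambda>x y. c * omega1 U A x y)"
  by (rule ext, rule ext) (simp add: bsimps algebra_simps)

lemma omega1_id: "unitary1 U \<Longrightarrow> omega1 U id1 = id1"
  by (simp add: omega1_def unitary1_def)

lemma omega1_mult: "unitary1 U \<Longrightarrow> mmul1 (omega1 U A) (omega1 U B) = omega1 U (mmul1 A B)"
  unfolding omega1_def unitary1_def
  by (metis mmul1_assoc mmul1_id1)

lemma pauli_sq: "mmul1 (pauli1 a) (pauli1 a) = id1"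
  by (rule ext, rule ext) (cases a; auto simp: bsimps pauli1_def split: bool.splits)

lemma sadj1_omega: "sadj1 (omega1 U) = omega1 (dagger1 U)"
  by (rule ext, rule ext, rule ext) (auto simp: bsimps sadj1_def hs1_def munit1_def algebra_simps)

lemma hs1_pauli: "hs1 (pauli1 a) (pauli1 b) = (if a = b then 2 else 0)"
  by (cases a; cases b; auto simp: hs1_def sumB pauli1_def id1_def split: bool.splits)



lemma sumBB: "(\<Sum>a\<in>(UNIV::(bool\<times>bool) set). f a) = f (False,False) + f (False,True) + f (True,False) + f (True,True)"
proof -
  have u: "(UNIV::(bool\<times>bool) set) = {(False,False),(False,True),(True,False),(True,True)}"
    by (auto simp: UNIV_bool)
  show ?thesis by (subst u) (simp add: add.assoc)
qed

lemma omega1_coef: "omega1 U A x y = (\<Sum>p\<in>UNIV. \<Sum>q\<in>UNIV. U x p * A p q * cnj (U y q))"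
  by (simp add: bsimps algebra_simps)

lemma omega1_lin: "omega1 U (\<lambda>x y. \<Sum>a\<in>(UNIV::(bool\<times>bool) set). k a * P a x y) = (\<lambda>x y. \<Sum>a\<in>UNIV. k a * omega1 U (P a) x y)"
  by (rule ext, rule ext) (simp add: omega1_coef sumBB sumB algebra_simps)

lemma pauli_expand: "A = (\<lambda>x y. \<Sum>a\<in>UNIV. (hs1 (pauli1 a) A / 2) * pauli1 a x y)"
  by (rule ext, rule ext) (auto simp: sumBB sumB hs1_def pauli1_def id1_def field_simps)

lemma omega_eq_paulis: "(\<forall>a. omega1 U (pauli1 a) = omega1 V (pauli1 a)) \<Longrightarrow> omega1 U = omega1 V"
proof (rule ext)
  fix A assume h: "\<forall>a. omega1 U (pauli1 a) = omega1 V (pauli1 a)"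
  have "omega1 U A = omega1 U (\<lambda>x y. \<Sum>a\<in>UNIV. (hs1 (pauli1 a) A / 2) * pauli1 a x y)"
    by (subst pauli_expand[of A]) simp
  also have "\<dots> = omega1 V (\<lambda>x y. \<Sum>a\<in>UNIV. (hs1 (pauli1 a) A / 2) * pauli1 a x y)"
    by (simp only: omega1_lin h)
  also have "\<dots> = omega1 V A" by (subst pauli_expand[of A]) simp
  finally show "omega1 U A = omega1 V A" .
qed

lemma hs1_scale: "hs1 A (\<lambda>x y. c * B x y) = c * hs1 A B"
  by (simp add: hs1_def sumB algebra_simps)

lemma pauli_nz: "pauli1 a \<noteq> (\<lambda>x y. 0)"
proof
  assume "pauli1 a = (\<lambda>x y. 0)"
  then have "hs1 (pauli1 a) (pauli1 a) = 0" by (simp add: hs1_def)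
  then show False by (simp add: hs1_pauli)
qed

lemma omega1_zero: "omega1 U (\<lambda>x y. 0) = (\<lambda>x y. 0)"
  by (simp add: bsimps)

lemma mmul1_scale: "mmul1 (\<lambda>x y. c * A x y) (\<lambda>x y. c * A x y) = (\<lambda>x y. (c*c) * mmul1 A A x y)"
  by (rule ext, rule ext) (simp add: bsimps algebra_simps)

lemma coef_sq:
  assumes "unitary1 U" "omega1 U (pauli1 a) = (\<lambda>x y. c * pauli1 b x y)"
  shows "c = 1 \<or> c = -1"
proof -
  have "mmul1 (omega1 U (pauli1 a)) (omega1 U (pauli1 a)) = id1"
    using assms(1) by (simp add: omega1_mult pauli_sq omega1_id)
  then have "(\<lambda>x y. (c*c) * id1 x y) = id1" using assms(2) by (simp add: mmul1_scale pauli_sq)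
  then have "c * c * id1 True True = id1 True True" by metis
  then have "c * c = 1" by (simp add: id1_def)
  then show ?thesis by (metis power2_eq_1_iff power2_eq_square)
qed

lemma clifford_dagger:
  assumes "clifford_unitary1 U"
  shows "clifford_unitary1 (dagger1 U)"
proof -
  have un: "unitary1 U" using assms by (simp add: clifford_unitary1_def)
  obtain b c where bc: "\<And>a. omega1 U (pauli1 a) = (\<lambda>x y. c a * pauli1 (b a) x y)"
    using assms unfolding clifford_unitary1_def by metis
  have cnz: "c a \<noteq> 0" for a
  proof
    assume "c a = 0"
    then have "omega1 U (pauli1 a) = (\<lambda>x y. 0)" using bc[of a] by simp
    then have "omega1 (dagger1 U) (omega1 U (pauli1 a)) = (\<lambda>x y. 0)" by (simp add: omega1_zero)
    then show False using omega1_inv(1)[OF un] pauli_nz by simp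
  qed
  have "inj b"
  proof (rule injI)
    fix a a' assume eq: "b a = b a'"
    have "omega1 U (\<lambda>x y. c a' * pauli1 a x y) = omega1 U (\<lambda>x y. c a * pauli1 a' x y)"
      by (simp add: omega1_scale bc eq mult_ac)
    then have "omega1 (dagger1 U) (omega1 U (\<lambda>x y. c a' * pauli1 a x y)) = omega1 (dagger1 U) (omega1 U (\<lambda>x y. c a * pauli1 a' x y))"
      by simp
    then have e: "(\<lambda>x y. c a' * pauli1 a x y) = (\<lambda>x y. c a * pauli1 a' x y)"
      by (simp only: omega1_inv(1)[OF un])
    show "a = a'"
    proof (rule ccontr)
      assume "a \<noteq> a'"
      have "hs1 (pauli1 a) (\<lambda>x y. c a' * pauli1 a x y) = hs1 (pauli1 a) (\<lambda>x y. c a * pauli1 a' x y)"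
        using e by simp
      then have "c a' * 2 = 0" using \<open>a \<noteq> a'\<close> by (simp add: hs1_scale hs1_pauli)
      then show False using cnz by simp
    qed
  qed
  then have "surj b" by (rule finite_UNIV_inj_surj[OF finite_class.finite_UNIV])
  have "\<exists>b' c'. omega1 (dagger1 U) (pauli1 a0) = (\<lambda>x y. c' * pauli1 b' x y)" for a0
  proof -
    obtain a where a: "b a = a0" using \<open>surj b\<close> by (metis surjD)
    have "pauli1 a = omega1 (dagger1 U) (omega1 U (pauli1 a))" by (simp add: omega1_inv(1)[OF un])
    also have "\<dots> = (\<lambda>x y. c a * omega1 (dagger1 U) (pauli1 a0) x y)" by (simp add: bc a omega1_scale)
    finally have "(\<lambda>x y. inverse (c a) * pauli1 a x y) = omega1 (dagger1 U) (pauli1 a0)"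
      using cnz[of a] by (auto simp: fun_eq_iff)
    then show ?thesis by metis
  qed
  then show ?thesis using un by (simp add: clifford_unitary1_def unitary1_dagger)
qed

lemma clifford_mmul:
  assumes "clifford_unitary1 U" "clifford_unitary1 V"
  shows "clifford_unitary1 (mmul1 U V)"
proof -
  have "\<exists>b c. omega1 (mmul1 U V) (pauli1 a) = (\<lambda>x y. c * pauli1 b x y)" for a
  proof -
    obtain b c where 1: "omega1 V (pauli1 a) = (\<lambda>x y. c * pauli1 b x y)"
      using assms(2) unfolding clifford_unitary1_def by metis
    obtain b' c' where 2: "omega1 U (pauli1 b) = (\<lambda>x y. c' * pauli1 b' x y)"
      using assms(1) unfolding clifford_unitary1_def by metis
    have "omega1 (mmul1 U V) (pauli1 a) = (\<lambda>x y. (c * c') * pauli1 b' x y)"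
      by (simp add: omega1_comp[symmetric] 1 omega1_scale 2 mult_ac)
    then show ?thesis by metis
  qed
  then show ?thesis using assms by (simp add: clifford_unitary1_def unitary1_mmul)
qed



lemma Cl1_rep: "g \<in> Cl1 \<Longrightarrow> \<exists>U. clifford_unitary1 U \<and> g = omega1 U"
  by (auto simp: Cl1_def)

lemma omega_in_Cl1: "clifford_unitary1 U \<Longrightarrow> omega1 U \<in> Cl1"
  by (auto simp: Cl1_def)

lemma Cl1_comp: "g \<in> Cl1 \<Longrightarrow> h \<in> Cl1 \<Longrightarrow> g \<circ> h \<in> Cl1"
proof -
  assume "g \<in> Cl1" "h \<in> Cl1"
  then obtain U V where "clifford_unitary1 U" "g = omega1 U" "clifford_unitary1 V" "h = omega1 V"
    by (metis Cl1_rep)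
  moreover have "omega1 U \<circ> omega1 V = omega1 (mmul1 U V)" by (simp add: fun_eq_iff omega1_comp)
  ultimately have "g \<circ> h = omega1 (mmul1 U V)" by simp
  then show ?thesis using \<open>clifford_unitary1 U\<close> \<open>clifford_unitary1 V\<close>
    by (simp add: omega_in_Cl1 clifford_mmul)
qed

lemma sadj1_Cl1: "g \<in> Cl1 \<Longrightarrow> sadj1 g \<in> Cl1"
  by (metis Cl1_rep omega_in_Cl1 clifford_dagger sadj1_omega)

lemma Cl1_inv: "g \<in> Cl1 \<Longrightarrow> sadj1 g \<circ> g = id \<and> g \<circ> sadj1 g = id"
  by (metis Cl1_rep sadj1_omega omega1_inv clifford_unitary1_def comp_apply eq_id_iff)

lemma sadj1_comp: "g \<in> Cl1 \<Longrightarrow> h \<in> Cl1 \<Longrightarrow> sadj1 (g \<circ> h) = sadj1 h \<circ> sadj1 g"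
proof -
  assume "g \<in> Cl1" "h \<in> Cl1"
  then obtain U V where gh: "g = omega1 U" "h = omega1 V"
    by (metis Cl1_rep)
  have 1: "omega1 U \<circ> omega1 V = omega1 (mmul1 U V)" by (simp add: fun_eq_iff omega1_comp)
  have "sadj1 (omega1 (mmul1 U V)) = sadj1 (omega1 V) \<circ> sadj1 (omega1 U)"
    by (simp add: sadj1_omega fun_eq_iff omega1_comp dagger1_mmul1)
  then show ?thesis unfolding gh 1 .
qed

lemma id_Cl1: "id \<in> Cl1"
proof -
  have u: "unitary1 id1" by (simp add: unitary1_def)
  have o: "omega1 id1 = id" by (simp add: fun_eq_iff omega1_def)
  have "\<forall>a. omega1 id1 (pauli1 a) = (\<lambda>x y. 1 * pauli1 a x y)" by (simp add: o)
  then have "clifford_unitary1 id1" using u unfolding clifford_unitary1_def by blast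
  then show ?thesis using o omega_in_Cl1 by metis
qed

lemma finite_Cl1: "finite Cl1"
proof -
  define T where "T = (\<lambda>(c,b). (\<lambda>x y. c * pauli1 b x y)) ` ({1,-1::complex} \<times> (UNIV::(bool\<times>bool) set))"
  have fT: "finite T" unfolding T_def by simp
  define F where "F = (\<lambda>\<Phi>::sop1. \<lambda>a. \<Phi> (pauli1 a))"
  have inj: "inj_on F Cl1"
  proof (rule inj_onI)
    fix g h assume "g \<in> Cl1" "h \<in> Cl1" "F g = F h"
    then obtain U V where "g = omega1 U" "h = omega1 V"
      by (metis Cl1_rep)
    then show "g = h" using \<open>F g = F h\<close> omega_eq_paulis unfolding F_def by metis
  qed
  define P where "P = {f. \<forall>x. (x \<in> (UNIV::(bool\<times>bool) set) \<longrightarrow> f x \<in> T) \<and> (x \<notin> UNIV \<longrightarrow> f x = undefined)}"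
  have sub: "F ` Cl1 \<subseteq> P"
  proof
    fix f assume "f \<in> F ` Cl1"
    then obtain U where U: "clifford_unitary1 U" "f = F (omega1 U)" by (auto simp: Cl1_def)
    have "f a \<in> T" for a
    proof -
      obtain b c where bc: "omega1 U (pauli1 a) = (\<lambda>x y. c * pauli1 b x y)"
        using U(1) unfolding clifford_unitary1_def by metis
      have "c = 1 \<or> c = -1" using coef_sq[OF _ bc] U(1) by (auto simp: clifford_unitary1_def)
      then show ?thesis using bc U(2) unfolding F_def T_def by (auto intro!: image_eqI[where x="(c,b)"])
    qed
    then show "f \<in> P" by (auto simp: P_def)
  qed
  have "finite P" unfolding P_def using fT by (intro finite_set_of_finite_funs) simp_all
  then have "finite (F ` Cl1)" using sub finite_subset by blast
  then show ?thesis using inj finite_imageD by blast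
qed

lemma hs1_omega: "hs1 A (omega1 U C) = hs1 (omega1 (dagger1 U) A) C"
  by (simp add: hs1_def bsimps algebra_simps)

lemma W_struct:
  assumes "g \<in> Cl1"
  shows "\<exists>s b0. b0 \<noteq> (False,False) \<and> (s = 1 \<or> s = -1) \<and> sadj1 g pauliZ = (\<lambda>x y. s * pauli1 b0 x y)"
proof -
  obtain U where U: "clifford_unitary1 U" "g = omega1 U" using assms Cl1_rep by blast
  have Ud: "clifford_unitary1 (dagger1 U)" using clifford_dagger U(1) by blast
  obtain b0 s where bs: "omega1 (dagger1 U) pauliZ = (\<lambda>x y. s * pauli1 b0 x y)"
    using Ud unfolding clifford_unitary1_def by metis
  have s: "s = 1 \<or> s = -1" using coef_sq[OF _ bs] Ud by (auto simp: clifford_unitary1_def)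
  have un: "unitary1 U" using U(1) by (simp add: clifford_unitary1_def)
  have "b0 \<noteq> (False,False)"
  proof
    assume "b0 = (False,False)"
    then have "omega1 (dagger1 U) pauliZ = (\<lambda>x y. s * id1 x y)" using bs by (simp add: pauli1_def)
    then have "omega1 U (omega1 (dagger1 U) pauliZ) = (\<lambda>x y. s * id1 x y)"
      by (simp add: omega1_scale omega1_id[OF un])
    then have "pauliZ = (\<lambda>x y. s * id1 x y)" by (simp add: omega1_inv[OF un])
    then have "pauliZ False False = s * id1 False False" "pauliZ True True = s * id1 True True" by metis+
    then show False by (simp add: pauli1_def id1_def)
  qed
  then show ?thesis using bs s U(2) sadj1_omega by metis
qed

lemma cond_W:
  assumes "g \<in> Cl1"
  shows "sadj1 g \<circ> ketbra1 pauliZ pauliZ \<circ> g = ketbra1 (sadj1 g pauliZ) (sadj1 g pauliZ)"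
proof -
  obtain U where U: "clifford_unitary1 U" "g = omega1 U" using assms Cl1_rep by blast
  show ?thesis
    by (rule ext) (simp add: U(2) sadj1_omega ketbra1_def omega1_scale hs1_omega)
qed

lemma ketbra_sign: "s = 1 \<or> s = -1 \<Longrightarrow> ketbra1 (\<lambda>x y. s * P x y) (\<lambda>x y. s * P x y) = ketbra1 P P"
  by (elim disjE) (simp_all add: fun_eq_iff ketbra1_def hs1_def sum_negf)

lemma ketbra_inj:
  assumes "ketbra1 (pauli1 b) (pauli1 b) = ketbra1 (pauli1 b') (pauli1 b')"
  shows "b = b'"
proof (rule ccontr)
  assume ne: "b \<noteq> b'"
  have "ketbra1 (pauli1 b) (pauli1 b) (pauli1 b) = ketbra1 (pauli1 b') (pauli1 b') (pauli1 b)"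
    using assms by simp
  then have "(\<lambda>u v. 2 * pauli1 b u v) = (\<lambda>u v. 0)" using ne
    by (simp add: ketbra1_def hs1_pauli)
  then have "pauli1 b = (\<lambda>u v. 0)" by (simp add: fun_eq_iff)
  then show False using pauli_nz by blast
qed

definition cnd :: "sop1 \<Rightarrow> bool \<times> bool \<Rightarrow> bool" where
  "cnd g b \<longleftrightarrow> sadj1 g \<circ> ketbra1 pauliZ pauliZ \<circ> g = ketbra1 (pauli1 b) (pauli1 b)"

definition alpha :: "sop1 \<Rightarrow> bool \<times> bool" where
  "alpha g = (SOME b. b \<noteq> (False,False) \<and> cnd g b)"

lemma alpha:
  assumes "g \<in> Cl1"
  shows "alpha g \<noteq> (False,False)" "cnd g (alpha g)" "cnd g b \<Longrightarrow> b = alpha g"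
proof -
  obtain s b0 where sb: "b0 \<noteq> (False,False)" "s = 1 \<or> s = -1" "sadj1 g pauliZ = (\<lambda>x y. s * pauli1 b0 x y)"
    using W_struct[OF assms] by blast
  have c: "cnd g b \<longleftrightarrow> b = b0" for b
    unfolding cnd_def cond_W[OF assms] sb(3) ketbra_sign[OF sb(2)]
    using ketbra_inj by metis
  have "alpha g = b0" unfolding alpha_def c using sb(1) by auto
  then show "alpha g \<noteq> (False,False)" "cnd g (alpha g)" "cnd g b \<Longrightarrow> b = alpha g"
    using c sb(1) by auto
qed



lemma StZ_alt: "StZ = {h \<in> Cl1. cnd h (True,False)}"
  by (simp add: StZ_def cnd_def)

lemma sadj1_sadj1: "g \<in> Cl1 \<Longrightarrow> sadj1 (sadj1 g) = g"
proof -
  assume "g \<in> Cl1"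
  then obtain U where "g = omega1 U" using Cl1_rep by blast
  then show ?thesis by (simp add: sadj1_omega)
qed

context
  fixes ga :: "bool \<times> bool \<Rightarrow> sop1"
  assumes GA: "\<forall>a. a \<noteq> (False, False) \<longrightarrow> ga a \<in> Cl1 \<and> cnd (ga a) a"
begin

lemma Gset_sub: "Gset ga b \<subseteq> Cl1"
proof
  fix g assume g: "g \<in> Gset ga b"
  show "g \<in> Cl1"
  proof (cases "b = (False,False)")
    case True then show ?thesis using g by (simp add: Gset_def)
  next
    case False
    then have k: "ga b \<in> Cl1" using GA by blast
    from g False obtain h where "h \<in> StZ" "g = h \<circ> ga b" by (auto simp: Gset_def)
    then show ?thesis using Cl1_comp[OF _ k] by (simp add: StZ_def)
  qed
qed

lemma Gset_iff:
  assumes b: "b \<noteq> (False,False)"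
  shows "g \<in> Gset ga b \<longleftrightarrow> g \<in> Cl1 \<and> alpha g = b"
proof -
  let ?Z = "ketbra1 pauliZ pauliZ"
  have kk: "ga b \<in> Cl1 \<and> cnd (ga b) b" using GA b by blast
  then have k: "ga b \<in> Cl1" and ck: "sadj1 (ga b) \<circ> ?Z \<circ> ga b = ketbra1 (pauli1 b) (pauli1 b)"
    unfolding cnd_def by blast+
  show ?thesis
  proof
    assume "g \<in> Gset ga b"
    then have "g \<in> (\<lambda>h. h \<circ> ga b) ` StZ" using b by (simp add: Gset_def)
    then obtain h where "h \<in> StZ" "g = h \<circ> ga b" by blast
    then have h: "h \<in> Cl1" "sadj1 h \<circ> ?Z \<circ> h = ?Z" "g = h \<circ> ga b"
      unfolding StZ_def by blast+
    have gC: "g \<in> Cl1" using Cl1_comp[OF h(1) k] h(3) by simp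
    have "sadj1 g \<circ> ?Z \<circ> g = sadj1 (ga b) \<circ> (sadj1 h \<circ> ?Z \<circ> h) \<circ> ga b"
      by (simp only: h(3) sadj1_comp[OF h(1) k] comp_assoc)
    also have "\<dots> = ketbra1 (pauli1 b) (pauli1 b)" using h(2) ck by simp
    finally have "cnd g b" by (simp add: cnd_def)
    then have "b = alpha g" by (rule alpha(3)[OF gC])
    then show "g \<in> Cl1 \<and> alpha g = b" using gC by simp
  next
    assume a: "g \<in> Cl1 \<and> alpha g = b"
    then have gC: "g \<in> Cl1" by blast
    have cg: "sadj1 g \<circ> ?Z \<circ> g = ketbra1 (pauli1 b) (pauli1 b)"
      using alpha(2)[OF gC] a unfolding cnd_def by simp
    define h where "h = g \<circ> sadj1 (ga b)"
    have hC: "h \<in> Cl1" unfolding h_def by (rule Cl1_comp[OF gC sadj1_Cl1[OF k]])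
    have inv: "sadj1 (ga b) \<circ> ga b = id" "ga b \<circ> sadj1 (ga b) = id" using Cl1_inv[OF k] by blast+
    have hg: "h \<circ> ga b = g" unfolding h_def by (simp only: comp_assoc inv(1) comp_id)
    have "sadj1 h = ga b \<circ> sadj1 g"
      unfolding h_def by (simp only: sadj1_comp[OF gC sadj1_Cl1[OF k]] sadj1_sadj1[OF k])
    then have "sadj1 h \<circ> ?Z \<circ> h = ga b \<circ> (sadj1 g \<circ> ?Z \<circ> g) \<circ> sadj1 (ga b)"
      unfolding h_def by (simp only: comp_assoc)
    also have "\<dots> = ga b \<circ> (sadj1 (ga b) \<circ> ?Z \<circ> ga b) \<circ> sadj1 (ga b)" by (simp only: cg ck)
    also have "\<dots> = (ga b \<circ> sadj1 (ga b)) \<circ> ?Z \<circ> (ga b \<circ> sadj1 (ga b))" by (simp only: comp_assoc)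
    also have "\<dots> = ?Z" by (simp only: inv(2) id_comp comp_id)
    finally have hz: "sadj1 h \<circ> ?Z \<circ> h = ?Z" .
    have "h \<in> StZ" unfolding StZ_def using hC hz by blast
    then have "g \<in> (\<lambda>h. h \<circ> ga b) ` StZ" using hg by (metis imageI)
    then show "g \<in> Gset ga b" using b by (simp add: Gset_def)
  qed
qed

lemma Gset_members: "g \<in> Cl1 \<Longrightarrow> {b. g \<in> Gset ga b} = {(False,False), alpha g}"
proof -
  assume g: "g \<in> Cl1"
  show ?thesis
  proof (intro set_eqI iffI)
    fix b assume "b \<in> {b. g \<in> Gset ga b}"
    then have gb: "g \<in> Gset ga b" by simp
    show "b \<in> {(False,False), alpha g}"
    proof (cases "b = (False,False)")
      case True then show ?thesis by simp
    next
      case False then have "alpha g = b" using Gset_iff[OF False] gb by blast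
      then show ?thesis by simp
    qed
  next
    fix b assume "b \<in> {(False,False), alpha g}"
    then have "b = (False,False) \<or> b = alpha g" by simp
    then show "b \<in> {b. g \<in> Gset ga b}"
    proof
      assume "b = (False,False)" then show ?thesis using g by (simp add: Gset_def)
    next
      assume "b = alpha g" then show ?thesis using g Gset_iff[OF alpha(1)[OF g], of g] by simp
    qed
  qed
qed

lemma finite_Gset: "finite (Gset ga b)"
  using Gset_sub finite_Cl1 finite_subset by blast

lemma card_Gset: "b \<noteq> (False,False) \<Longrightarrow> card (Gset ga b) = card StZ"
proof -
  assume b: "b \<noteq> (False,False)"
  have k: "ga b \<in> Cl1" using GA b by blast
  have "inj_on (\<lambda>h. h \<circ> ga b) StZ"
  proof (rule inj_onI)
    fix h h' assume "h \<circ> ga b = h' \<circ> ga b"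
    moreover have i: "ga b \<circ> sadj1 (ga b) = id" using Cl1_inv[OF k] by blast
    moreover have "h = (h \<circ> ga b) \<circ> sadj1 (ga b)" "h' = (h' \<circ> ga b) \<circ> sadj1 (ga b)"
      by (simp_all only: comp_assoc i comp_id)
    ultimately show "h = h'" by metis
  qed
  then show ?thesis using b by (simp add: Gset_def card_image)
qed

lemma card_Cl1: "card Cl1 = 3 * card StZ"
proof -
  have "Cl1 = Gset ga (False,True) \<union> Gset ga (True,True) \<union> Gset ga (True,False)"
  proof (intro set_eqI iffI)
    fix g assume g: "g \<in> Cl1"
    then have "alpha g \<noteq> (False,False)" by (rule alpha(1))
    then have "alpha g = (False,True) \<or> alpha g = (True,True) \<or> alpha g = (True,False)"
      by (cases "alpha g") auto
    then show "g \<in> Gset ga (False,True) \<union> Gset ga (True,True) \<union> Gset ga (True,False)"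
      using g by (auto simp: Gset_iff)
  next
    fix g assume "g \<in> Gset ga (False,True) \<union> Gset ga (True,True) \<union> Gset ga (True,False)"
    then show "g \<in> Cl1" using Gset_sub by blast
  qed
  moreover have d1: "Gset ga (False,True) \<inter> Gset ga (True,True) = {}" by (auto simp: Gset_iff)
  moreover have d2: "(Gset ga (False,True) \<union> Gset ga (True,True)) \<inter> Gset ga (True,False) = {}"
    by (auto simp: Gset_iff)
  ultimately have "card Cl1 = card (Gset ga (False,True)) + card (Gset ga (True,True)) + card (Gset ga (True,False))"
    using card_Un_disjoint[OF finite_Gset finite_Gset d1] card_Un_disjoint[OF _ finite_Gset d2] finite_Gset
    by (metis finite_UnI)
  then show ?thesis by (simp add: card_Gset)
qed

lemma card_Cl1_pos: "card Cl1 > 0"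
  using id_Cl1 finite_Cl1 card_gt_0_iff by blast

end



lemma basis_listset: "basis n = listset n (\<lambda>_. UNIV)"
  by (simp add: basis_def listset_def)

lemma finite_basis: "finite (basis n)"
  unfolding basis_listset by (rule finite_listset) simp

lemma sum_collapse2:
  assumes "u \<in> A" "v \<in> B" "finite A" "finite B"
  shows "(\<Sum>x\<in>A. \<Sum>y\<in>B. (if x = u \<and> y = v then 1 else 0) * T x y) = (T u v :: complex)"
proof -
  have "(\<Sum>x\<in>A. \<Sum>y\<in>B. (if x = u \<and> y = v then 1 else 0) * T x y) = (\<Sum>x\<in>A. if x = u then T x v else 0)"
    using assms by (intro sum.cong refl) (auto simp: if_distrib[of "\<lambda>z. z * _"] cong: if_cong)
  also have "\<dots> = T u v" using assms by simp
  finally show ?thesis .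
qed

lemma sum_collapse2':
  assumes "u \<in> A" "v \<in> B" "finite A" "finite B"
  shows "(\<Sum>x\<in>A. \<Sum>y\<in>B. (if u = x \<and> v = y then 1 else 0) * T x y) = (T u v :: complex)"
proof -
  have "(\<Sum>x\<in>A. \<Sum>y\<in>B. (if u = x \<and> v = y then 1 else 0) * T x y) = (\<Sum>x\<in>A. \<Sum>y\<in>B. (if x = u \<and> y = v then 1 else 0) * T x y)"
    by (intro sum.cong refl) auto
  then show ?thesis using sum_collapse2[OF assms] by simp
qed

lemma stensor_eval:
  "length gs = n \<Longrightarrow> stensor gs D p q =
     (\<Sum>x\<in>basis n. \<Sum>y\<in>basis n. D x y * (\<Prod>i<n. (gs!i) (munit1 (x!i) (y!i)) (p!i) (q!i)))"
  by (simp add: stensor_def ktensor_def)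

lemma stensor_unit:
  assumes "length gs = n" "u \<in> basis n" "v \<in> basis n"
  shows "stensor gs (munit u v) p q = (\<Prod>i<n. (gs!i) (munit1 (u!i) (v!i)) (p!i) (q!i))"
  unfolding stensor_eval[OF assms(1)] munit_def
  by (rule sum_collapse2[OF assms(2,3) finite_basis finite_basis])

lemma hs_unit: "u \<in> basis n \<Longrightarrow> v \<in> basis n \<Longrightarrow> hs n (munit u v) D = D u v"
  unfolding hs_def munit_def
  using sum_collapse2[OF _ _ finite_basis finite_basis, of u n v n D]
  by (simp add: if_distrib[of cnj] cong: if_cong)

lemma Mmeas_eval: "u \<in> basis n \<Longrightarrow> v \<in> basis n \<Longrightarrow> Mmeas n D u v = (if u = v then D u u else 0)"
proof -
  assume uv: "u \<in> basis n" "v \<in> basis n"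
  have "Mmeas n D u v = (\<Sum>x\<in>basis n. D x x * (if u = x \<and> v = x then 1 else 0))"
    unfolding Mmeas_def ketbra_def
    by (intro sum.cong refl) (simp add: hs_unit, simp add: munit_def)
  also have "\<dots> = (\<Sum>x\<in>basis n. if x = u then (if u = v then D u u else 0) else 0)"
    by (intro sum.cong refl) auto
  also have "\<dots> = (if u = v then D u u else 0)" using uv by (simp add: finite_basis)
  finally show ?thesis .
qed

lemma sadj_eval: "u \<in> basis n \<Longrightarrow> v \<in> basis n \<Longrightarrow> sadj n \<Phi> B u v = hs n (\<Phi> (munit u v)) B"
  unfolding sadj_def munit_def
  using sum_collapse2'[OF _ _ finite_basis finite_basis, of u n v n "\<lambda>x y. hs n (\<Phi> (\<lambda>ua va. if ua = x \<and> va = y then 1 else 0)) B"]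
  by (simp add: mult.commute)

definition fk :: "sop1 \<Rightarrow> bool \<Rightarrow> bool \<Rightarrow> bool \<Rightarrow> bool \<Rightarrow> complex" where
  "fk g u v x y = (\<Sum>b\<in>UNIV. cnj (g (munit1 u v) b b) * g (munit1 x y) b b)"

lemma lhs_kernel:
  assumes "length gs = n" "u \<in> basis n" "v \<in> basis n"
  shows "sadj n (stensor gs) (Mmeas n (stensor gs C)) u v =
    (\<Sum>x\<in>basis n. \<Sum>y\<in>basis n. C x y * (\<Prod>i<n. fk (gs!i) (u!i) (v!i) (x!i) (y!i)))"
proof -
  define P where "P = (\<lambda>p q. \<Prod>i<n. (gs!i) (munit1 (u!i) (v!i)) (p!i) (q!i))"
  define B where "B = (\<lambda>x y p. \<Prod>i<n. (gs!i) (munit1 (x!i) (y!i)) (p!i) (p!i))"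
  define T where "T = (\<lambda>p. \<Sum>x\<in>basis n. \<Sum>y\<in>basis n. C x y * B x y p)"
  have "sadj n (stensor gs) (Mmeas n (stensor gs C)) u v = hs n (stensor gs (munit u v)) (Mmeas n (stensor gs C))"
    by (rule sadj_eval[OF assms(2,3)])
  also have "\<dots> = (\<Sum>p\<in>basis n. \<Sum>q\<in>basis n. cnj (P p q) * (if p = q then T p else 0))"
    unfolding hs_def
    by (intro sum.cong refl) (simp add: stensor_unit[OF assms] Mmeas_eval P_def, simp add: stensor_eval[OF assms(1)] T_def B_def)
  also have "\<dots> = (\<Sum>p\<in>basis n. cnj (P p p) * T p)"
  proof (intro sum.cong refl)
    fix p assume p: "p \<in> basis n"
    have "(\<Sum>q\<in>basis n. cnj (P p q) * (if p = q then T p else 0)) = (\<Sum>q\<in>basis n. if p = q then cnj (P p p) * T p else 0)"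
      by (intro sum.cong refl) auto
    also have "\<dots> = cnj (P p p) * T p" using p by (simp add: finite_basis)
    finally show "(\<Sum>q\<in>basis n. cnj (P p q) * (if p = q then T p else 0)) = cnj (P p p) * T p" .
  qed
  also have "\<dots> = (\<Sum>p\<in>basis n. \<Sum>x\<in>basis n. \<Sum>y\<in>basis n. C x y * (cnj (P p p) * B x y p))"
    unfolding T_def by (simp add: sum_distrib_left mult_ac)
  also have "\<dots> = (\<Sum>x\<in>basis n. \<Sum>y\<in>basis n. \<Sum>p\<in>basis n. C x y * (cnj (P p p) * B x y p))"
    by (subst sum.swap, rule sum.cong, rule refl, rule sum.swap)
  also have "\<dots> = (\<Sum>x\<in>basis n. \<Sum>y\<in>basis n. C x y * (\<Sum>p\<in>basis n. \<Prod>i<n. cnj ((gs!i) (munit1 (u!i) (v!i)) (p!i) (p!i)) * (gs!i) (munit1 (x!i) (y!i)) (p!i) (p!i)))"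
    by (simp add: sum_distrib_left P_def B_def prod.distrib)
  also have "\<dots> = (\<Sum>x\<in>basis n. \<Sum>y\<in>basis n. C x y * (\<Prod>i<n. fk (gs!i) (u!i) (v!i) (x!i) (y!i)))"
    unfolding basis_listset fk_def
    by (subst sum_prod_listset[where f="\<lambda>i b. cnj ((gs!i) (munit1 (u!i) (v!i)) b b) * (gs!i) (munit1 (x!i) (y!i)) b b" for x y], simp, rule refl)
  finally show ?thesis .
qed

definition hk :: "bool \<times> bool \<Rightarrow> bool \<Rightarrow> bool \<Rightarrow> bool \<Rightarrow> bool \<Rightarrow> complex" where
  "hk b u v x y = cnj (pauli1 b x y) * pauli1 b u v / 2"

lemma npauli_prod:
  assumes "length a = n"
  shows "cnj (npauli a x y) * npauli a u v = (\<Prod>i<n. hk (a!i) (u!i) (v!i) (x!i) (y!i))"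
proof -
  have pa: "pauli a x y = (\<Prod>i<n. pauli1 (a!i) (x!i) (y!i))" for x y
    by (simp add: pauli_def ktensor_def assms)
  have r: "complex_of_real (sqrt (2 ^ n)) * complex_of_real (sqrt (2 ^ n)) = 2 ^ n"
    by (simp flip: of_real_mult)
  have "cnj (npauli a x y) * npauli a u v = cnj (pauli a x y) * pauli a u v / 2 ^ n"
    unfolding npauli_def using assms r by (simp add: field_simps)
  also have "\<dots> = (\<Prod>i<n. cnj (pauli1 (a!i) (x!i) (y!i)) * pauli1 (a!i) (u!i) (v!i)) / 2 ^ n"
    by (simp add: pa prod.distrib)
  also have "\<dots> = (\<Prod>i<n. hk (a!i) (u!i) (v!i) (x!i) (y!i))"
    by (simp add: hk_def prod_dividef)
  finally show ?thesis .
qed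

lemma rhs_kernel:
  assumes "length a = n"
  shows "ketbra n (npauli a) (npauli a) D u v =
    (\<Sum>x\<in>basis n. \<Sum>y\<in>basis n. D x y * (\<Prod>i<n. hk (a!i) (u!i) (v!i) (x!i) (y!i)))"
proof -
  have "ketbra n (npauli a) (npauli a) D u v = (\<Sum>x\<in>basis n. \<Sum>y\<in>basis n. D x y * (cnj (npauli a x y) * npauli a u v))"
    by (simp add: ketbra_def hs_def sum_distrib_left sum_distrib_right mult_ac)
  then show ?thesis by (simp add: npauli_prod[OF assms])
qed



lemma alpha_W:
  assumes "g \<in> Cl1"
  shows "\<exists>s. (s = 1 \<or> s = -1) \<and> sadj1 g pauliZ = (\<lambda>x y. s * pauli1 (alpha g) x y)"
proof -
  obtain s b0 where sb: "b0 \<noteq> (False,False)" "s = 1 \<or> s = -1" "sadj1 g pauliZ = (\<lambda>x y. s * pauli1 b0 x y)"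
    using W_struct[OF assms] by blast
  have "cnd g b0"
    unfolding cnd_def cond_W[OF assms] sb(3) ketbra_sign[OF sb(2)] ..
  then have "b0 = alpha g" by (rule alpha(3)[OF assms])
  then show ?thesis using sb by blast
qed

lemma omega1_unit: "omega1 U (munit1 x y) b b = U b x * cnj (U b y)"
  by (cases x; cases y; simp add: bsimps munit1_def)

lemma fk_Cl1:
  assumes "g \<in> Cl1"
  shows "fk g u v x y = hk (False,False) u v x y + hk (alpha g) u v x y"
proof -
  obtain U where U: "clifford_unitary1 U" "g = omega1 U" using assms Cl1_rep by blast
  have un: "unitary1 U" using U(1) by (simp add: clifford_unitary1_def)
  obtain s where s: "s = 1 \<or> s = -1" "sadj1 g pauliZ = (\<lambda>x y. s * pauli1 (alpha g) x y)"
    using alpha_W[OF assms] by blast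
  define Q where "Q = (\<lambda>b u v. cnj (U b u) * U b v)"
  have fkQ: "fk g u v x y = Q False u v * cnj (Q False x y) + Q True u v * cnj (Q True x y)"
    by (simp add: fk_def U(2) omega1_unit sumB Q_def mult_ac)
  have I: "id1 p q = Q False p q + Q True p q" for p q
  proof -
    have "mmul1 (dagger1 U) U p q = id1 p q" using un by (simp add: unitary1_def)
    then show ?thesis by (simp add: bsimps Q_def)
  qed
  have W: "s * pauli1 (alpha g) p q = Q False p q - Q True p q" for p q
  proof -
    have "sadj1 g pauliZ p q = s * pauli1 (alpha g) p q" using s(2) by simp
    moreover have "sadj1 g pauliZ p q = Q False p q - Q True p q"
      unfolding U(2) sadj1_omega by (cases p; cases q; simp add: bsimps pauli1_def Q_def)
    ultimately show ?thesis by simp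
  qed
  have ss: "cnj s * s = 1" using s(1) by auto
  have "hk (False,False) u v x y + hk (alpha g) u v x y
      = (cnj (id1 x y) * id1 u v + cnj (s * pauli1 (alpha g) x y) * (s * pauli1 (alpha g) u v)) / 2"
    unfolding hk_def using ss
    by (simp add: pauli1_def field_simps)
  also have "\<dots> = fk g u v x y"
    unfolding I W fkQ by (simp add: field_simps)
  finally show ?thesis by simp
qed



lemma ClN_listset: "ClN n = listset n (\<lambda>_. Cl1)"
  by (auto simp: ClN_def listset_def in_set_conv_nth) (use nth_mem in blast)

lemma PL_listset: "pauli_labels n = listset n (\<lambda>_. UNIV)"
  by (simp add: pauli_labels_def listset_def)

lemma Gprod_listset: "length a = n \<Longrightarrow> Gprod ga a = listset n (\<lambda>i. Gset ga (a!i))"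
  by (auto simp: Gprod_def listset_def)

lemma card_listset: "(\<forall>i<n. finite (S i)) \<Longrightarrow> card (listset n S) = (\<Prod>i<n. card (S i))"
  using sum_prod_listset[of n S "\<lambda>_ _. (1::nat)"] by simp

lemma stensor_map:
  "stensor (map F [0..<n]) D p q = (\<Sum>x\<in>basis n. \<Sum>y\<in>basis n. D x y * (\<Prod>i<n. F i (munit1 (x!i) (y!i)) (p!i) (q!i)))"
  by (simp add: stensor_eval)

lemma swap3: "(\<Sum>x\<in>X. \<Sum>y\<in>Y. \<Sum>a\<in>Z. f x y a) = (\<Sum>a\<in>Z. \<Sum>x\<in>X. \<Sum>y\<in>Y. f x y a)"
proof -
  have "(\<Sum>x\<in>X. \<Sum>y\<in>Y. \<Sum>a\<in>Z. f x y a) = (\<Sum>x\<in>X. \<Sum>a\<in>Z. \<Sum>y\<in>Y. f x y a)"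
    by (rule sum.cong[OF refl], rule sum.swap)
  also have "\<dots> = (\<Sum>a\<in>Z. \<Sum>x\<in>X. \<Sum>y\<in>Y. f x y a)" by (rule sum.swap)
  finally show ?thesis .
qed

context
  fixes ga :: "bool \<times> bool \<Rightarrow> sop1"
  assumes GA: "\<forall>a. a \<noteq> (False, False) \<longrightarrow> ga a \<in> Cl1 \<and> cnd (ga a) a"
begin

lemma supp_card: "3 ^ supp_size a * (\<Prod>i<length a. card (Gset ga (a!i))) = card Cl1 ^ length a"
proof (induction a)
  case Nil then show ?case by (simp add: supp_size_def)
next
  case (Cons b a)
  have 1: "supp_size (b # a) = (if b = (False,False) then 0 else 1) + supp_size a"
    by (simp add: supp_size_def)
  have 2: "(\<Prod>i<length (b#a). card (Gset ga ((b#a)!i))) = card (Gset ga b) * (\<Prod>i<length a. card (Gset ga (a!i)))"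
    by (simp only: length_Cons prod.lessThan_Suc_shift nth_Cons_0 nth_Cons_Suc)
  show ?case
  proof (cases "b = (False,False)")
    case True
    have "card (Gset ga b) = card Cl1" using True by (simp add: Gset_def)
    then show ?thesis unfolding 1 2 using Cons.IH True by simp
  next
    case False
    have "3 ^ supp_size (b # a) * (\<Prod>i<length (b#a). card (Gset ga ((b#a)!i)))
        = (3 * card (Gset ga b)) * (3 ^ supp_size a * (\<Prod>i<length a. card (Gset ga (a!i))))"
      unfolding 1 2 using False by simp
    also have "\<dots> = card Cl1 * card Cl1 ^ length a"
      using Cons.IH card_Gset[OF GA False] card_Cl1[OF GA] by simp
    finally show ?thesis by simp
  qed
qed

lemma prod_fk:
  assumes gs: "gs \<in> ClN n"
  shows "(\<Prod>i<n. fk (gs!i) (u!i) (v!i) (x!i) (y!i)) =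
    (\<Sum>a\<in>{a\<in>pauli_labels n. gs \<in> Gprod ga a}. \<Prod>i<n. hk (a!i) (u!i) (v!i) (x!i) (y!i))"
proof -
  have len: "length gs = n" and gi: "\<And>i. i < n \<Longrightarrow> gs!i \<in> Cl1"
    using gs by (auto simp: ClN_listset listset_def)
  have mem: "gs!i \<in> Gset ga b \<longleftrightarrow> b \<in> {(False,False), alpha (gs!i)}" if "i < n" for i b
  proof -
    have "b \<in> {b. gs!i \<in> Gset ga b} \<longleftrightarrow> b \<in> {(False,False), alpha (gs!i)}"
      by (simp only: Gset_members[OF GA gi[OF that]])
    then show ?thesis by simp
  qed
  have R: "{a\<in>pauli_labels n. gs \<in> Gprod ga a} = listset n (\<lambda>i. {(False,False), alpha (gs!i)})"
  proof (intro set_eqI)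
    fix a
    show "a \<in> {a\<in>pauli_labels n. gs \<in> Gprod ga a} \<longleftrightarrow> a \<in> listset n (\<lambda>i. {(False,False), alpha (gs!i)})"
    proof (cases "length a = n")
      case True
      have "(\<forall>i<n. gs!i \<in> Gset ga (a!i)) \<longleftrightarrow> (\<forall>i<n. a!i \<in> {(False,False), alpha (gs!i)})"
        using mem by blast
      then show ?thesis using True len by (simp add: pauli_labels_def Gprod_def listset_def)
    next
      case False
      then show ?thesis by (simp add: pauli_labels_def Gprod_def listset_def)
    qed
  qed
  have "(\<Sum>a\<in>{a\<in>pauli_labels n. gs \<in> Gprod ga a}. \<Prod>i<n. hk (a!i) (u!i) (v!i) (x!i) (y!i))
      = (\<Prod>i<n. \<Sum>b\<in>{(False,False), alpha (gs!i)}. hk b (u!i) (v!i) (x!i) (y!i))"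
    unfolding R by (rule sum_prod_listset) simp
  also have "\<dots> = (\<Prod>i<n. fk (gs!i) (u!i) (v!i) (x!i) (y!i))"
  proof (rule prod.cong[OF refl])
    fix i assume "i \<in> {..<n}"
    then have i: "i < n" by simp
    have "alpha (gs!i) \<noteq> (False,False)" using alpha(1)[OF gi[OF i]] .
    then show "(\<Sum>b\<in>{(False,False), alpha (gs!i)}. hk b (u!i) (v!i) (x!i) (y!i)) = fk (gs!i) (u!i) (v!i) (x!i) (y!i)"
      using fk_Cl1[OF gi[OF i]] by simp
  qed
  finally show ?thesis by (rule sym)
qed

lemma part1:
  assumes uv: "u \<in> basis n" "v \<in> basis n"
  shows "noisy_frame n \<Lambda> A u v =
    (\<Sum>a\<in>pauli_labels n. (1 / 3 ^ supp_size a) * ketbra n (npauli a) (npauli a) (Lambda_bar ga \<Lambda> a A) u v)"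
proof -
  define N where "N = (of_nat (card Cl1) :: complex) ^ n"
  define H where "H = (\<lambda>a x y. \<Prod>i<n. hk (a!i) (u!i) (v!i) (x!i) (y!i))"
  define K where "K = (\<lambda>gs a. \<Sum>x\<in>basis n. \<Sum>y\<in>basis n. \<Lambda> gs A x y * H a x y)"
  have fClN: "finite (ClN n)" unfolding ClN_listset by (rule finite_listset) (simp add: finite_Cl1)
  have fPL: "finite (pauli_labels n)" unfolding PL_listset by (rule finite_listset) simp
  have cardClN: "of_nat (card (ClN n)) = N"
    unfolding N_def ClN_listset by (simp add: card_listset finite_Cl1)
  have L1: "noisy_frame n \<Lambda> A u v = (\<Sum>gs\<in>ClN n. \<Sum>a\<in>{a\<in>pauli_labels n. gs \<in> Gprod ga a}. K gs a) / N"
  proof -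
    have "noisy_frame n \<Lambda> A u v = (\<Sum>gs\<in>ClN n. sadj n (stensor gs) (Mmeas n (stensor gs (\<Lambda> gs A))) u v) / N"
      by (simp add: noisy_frame_def savg_def cardClN)
    also have "\<dots> = (\<Sum>gs\<in>ClN n. \<Sum>a\<in>{a\<in>pauli_labels n. gs \<in> Gprod ga a}. K gs a) / N"
    proof (rule arg_cong[where f="\<lambda>z. z / N"], rule sum.cong[OF refl])
      fix gs assume gs: "gs \<in> ClN n"
      have len: "length gs = n" using gs by (simp add: ClN_def)
      have "sadj n (stensor gs) (Mmeas n (stensor gs (\<Lambda> gs A))) u v
          = (\<Sum>x\<in>basis n. \<Sum>y\<in>basis n. \<Lambda> gs A x y * (\<Sum>a\<in>{a\<in>pauli_labels n. gs \<in> Gprod ga a}. H a x y))"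
        unfolding lhs_kernel[OF len uv] H_def prod_fk[OF gs] ..
      also have "\<dots> = (\<Sum>a\<in>{a\<in>pauli_labels n. gs \<in> Gprod ga a}. K gs a)"
        unfolding K_def by (simp only: sum_distrib_left) (rule swap3)
      finally show "sadj n (stensor gs) (Mmeas n (stensor gs (\<Lambda> gs A))) u v = (\<Sum>a\<in>{a\<in>pauli_labels n. gs \<in> Gprod ga a}. K gs a)" .
    qed
    finally show ?thesis .
  qed
  also have "\<dots> = (\<Sum>a\<in>pauli_labels n. \<Sum>gs\<in>{gs\<in>ClN n. gs \<in> Gprod ga a}. K gs a) / N"
    using sum.swap_restrict[OF fClN fPL, of K "\<lambda>gs a. gs \<in> Gprod ga a"] by simp
  also have "\<dots> = (\<Sum>a\<in>pauli_labels n. (\<Sum>gs\<in>Gprod ga a. K gs a) / N)"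
  proof -
    have "{gs\<in>ClN n. gs \<in> Gprod ga a} = Gprod ga a" if "a \<in> pauli_labels n" for a
    proof -
      have "length a = n" using that by (simp add: pauli_labels_def)
      then have "Gprod ga a \<subseteq> ClN n"
        unfolding Gprod_listset[OF \<open>length a = n\<close>] ClN_listset listset_def
        using Gset_sub[OF GA] by blast
      then show ?thesis by blast
    qed
    then show ?thesis by (simp add: sum_divide_distrib)
  qed
  also have "\<dots> = (\<Sum>a\<in>pauli_labels n. (1 / 3 ^ supp_size a) * ketbra n (npauli a) (npauli a) (Lambda_bar ga \<Lambda> a A) u v)"
  proof (rule sum.cong[OF refl])
    fix a assume a: "a \<in> pauli_labels n"
    have len: "length a = n" using a by (simp add: pauli_labels_def)
    define cG where "cG = (of_nat (card (Gprod ga a)) :: complex)"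
    have fin: "\<forall>i<n. finite (Gset ga (a!i))" using finite_Gset[OF GA] by blast
    have "3 ^ supp_size a * card (Gprod ga a) = card Cl1 ^ n"
    proof -
      have "3 ^ supp_size a * (\<Prod>i<n. card (Gset ga (a!i))) = card Cl1 ^ n"
        using supp_card[of a] len by simp
      then show ?thesis unfolding Gprod_listset[OF len] card_listset[OF fin] .
    qed
    then have c: "3 ^ supp_size a * cG = N"
      unfolding cG_def N_def by (metis of_nat_mult of_nat_numeral of_nat_power)
    have "ketbra n (npauli a) (npauli a) (Lambda_bar ga \<Lambda> a A) u v
        = (\<Sum>x\<in>basis n. \<Sum>y\<in>basis n. (\<Sum>gs\<in>Gprod ga a. \<Lambda> gs A x y) / cG * H a x y)"
      unfolding rhs_kernel[OF len] H_def by (simp add: Lambda_bar_def savg_def cG_def)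
    also have "\<dots> = (\<Sum>gs\<in>Gprod ga a. K gs a) / cG"
    proof -
      have "(\<Sum>gs\<in>Gprod ga a. K gs a) / cG = (\<Sum>gs\<in>Gprod ga a. \<Sum>x\<in>basis n. \<Sum>y\<in>basis n. \<Lambda> gs A x y * H a x y / cG)"
        unfolding K_def by (simp only: sum_divide_distrib)
      also have "\<dots> = (\<Sum>x\<in>basis n. \<Sum>y\<in>basis n. \<Sum>gs\<in>Gprod ga a. \<Lambda> gs A x y * H a x y / cG)"
        by (rule swap3[symmetric])
      also have "\<dots> = (\<Sum>x\<in>basis n. \<Sum>y\<in>basis n. (\<Sum>gs\<in>Gprod ga a. \<Lambda> gs A x y) / cG * H a x y)"
        by (simp add: sum_divide_distrib sum_distrib_right)
      finally show ?thesis by simp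
    qed
    finally have "(1 / 3 ^ supp_size a) * ketbra n (npauli a) (npauli a) (Lambda_bar ga \<Lambda> a A) u v
        = (\<Sum>gs\<in>Gprod ga a. K gs a) / (3 ^ supp_size a * cG)" by simp
    then show "(\<Sum>gs\<in>Gprod ga a. K gs a) / N = (1 / 3 ^ supp_size a) * ketbra n (npauli a) (npauli a) (Lambda_bar ga \<Lambda> a A) u v"
      using c by simp
  qed
  finally show ?thesis .
qed

lemma part2:
  assumes loc: "\<forall>gs\<in>ClN n. \<Lambda> gs = stensor (map (\<lambda>i. \<Lambda>i i (gs ! i)) [0..<n])"
      and a: "a \<in> pauli_labels n"
  shows "Lambda_bar ga \<Lambda> a A u v = stensor (map (\<lambda>i. savg (Gset ga (a ! i)) (\<Lambda>i i)) [0..<n]) A u v"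
proof -
  have len: "length a = n" using a by (simp add: pauli_labels_def)
  have fin: "\<forall>i<n. finite (Gset ga (a!i))" using finite_Gset[OF GA] by blast
  have GP: "Gprod ga a = listset n (\<lambda>i. Gset ga (a!i))" by (rule Gprod_listset[OF len])
  have sub: "Gprod ga a \<subseteq> ClN n"
    unfolding GP ClN_listset listset_def using Gset_sub[OF GA] by blast
  define E where "E = (\<lambda>i g x y. \<Lambda>i i g (munit1 ((x::bool list)!i) ((y::bool list)!i)) (u!i) (v!i))"
  define cG where "cG = (\<Prod>i<n. (of_nat (card (Gset ga (a!i))) :: complex))"
  have cG: "of_nat (card (Gprod ga a)) = cG"
    unfolding cG_def GP card_listset[OF fin] by simp
  have "Lambda_bar ga \<Lambda> a A u v = (\<Sum>gs\<in>Gprod ga a. \<Lambda> gs A u v) / cG"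
    by (simp add: Lambda_bar_def savg_def cG)
  also have "\<dots> = (\<Sum>gs\<in>Gprod ga a. \<Sum>x\<in>basis n. \<Sum>y\<in>basis n. A x y * (\<Prod>i<n. E i (gs!i) x y)) / cG"
  proof (rule arg_cong[where f="\<lambda>z. z / cG"], rule sum.cong[OF refl])
    fix gs assume "gs \<in> Gprod ga a"
    then have "gs \<in> ClN n" using sub by blast
    then have "\<Lambda> gs = stensor (map (\<lambda>i. \<Lambda>i i (gs ! i)) [0..<n])" using loc by blast
    then show "\<Lambda> gs A u v = (\<Sum>x\<in>basis n. \<Sum>y\<in>basis n. A x y * (\<Prod>i<n. E i (gs!i) x y))"
      by (simp add: stensor_map E_def)
  qed
  also have "\<dots> = (\<Sum>x\<in>basis n. \<Sum>y\<in>basis n. A x y * (\<Sum>gs\<in>Gprod ga a. \<Prod>i<n. E i (gs!i) x y)) / cG"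
    by (subst swap3[symmetric]) (simp only: sum_distrib_left)
  also have "\<dots> = (\<Sum>x\<in>basis n. \<Sum>y\<in>basis n. A x y * ((\<Prod>i<n. \<Sum>g\<in>Gset ga (a!i). E i g x y) / cG))"
  proof -
    have "(\<Sum>gs\<in>Gprod ga a. \<Prod>i<n. E i (gs!i) x y) = (\<Prod>i<n. \<Sum>g\<in>Gset ga (a!i). E i g x y)" for x y
      unfolding GP by (rule sum_prod_listset[OF fin, where f="\<lambda>i g. E i g x y"])
    then show ?thesis by (simp add: sum_divide_distrib)
  qed
  also have "\<dots> = stensor (map (\<lambda>i. savg (Gset ga (a ! i)) (\<Lambda>i i)) [0..<n]) A u v"
    unfolding stensor_map cG_def
    by (simp add: savg_def E_def prod_dividef)
  finally show ?thesis .
qed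

end


theorem proposition4:
  fixes n :: nat
    and \<Lambda> :: "sop1 list \<Rightarrow> sop"
    and ga :: "bool \<times> bool \<Rightarrow> sop1"
  assumes channels: "\<forall>gs\<in>ClN n. quantum_channel n (\<Lambda> gs)"
    and ga: "\<forall>a. a \<noteq> (False, False) \<longrightarrow>
               ga a \<in> Cl1 \<and> sadj1 (ga a) \<circ> ketbra1 pauliZ pauliZ \<circ> ga a = ketbra1 (pauli1 a) (pauli1 a)"
  shows "(\<forall>A. \<forall>u\<in>basis n. \<forall>v\<in>basis n.
           noisy_frame n \<Lambda> A u v =
           (\<Sum>a\<in>pauli_labels n. (1 / 3 ^ supp_size a) *
               ketbra n (npauli a) (npauli a) (Lambda_bar ga \<Lambda> a A) u v)) \<and>
         (\<forall>\<Lambda>i :: nat \<Rightarrow> sop1 \<Rightarrow> sop1.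
           (\<forall>gs\<in>ClN n. \<Lambda> gs = stensor (map (\<lambda>i. \<Lambda>i i (gs ! i)) [0..<n])) \<longrightarrow>
           (\<forall>a\<in>pauli_labels n. \<forall>A. \<forall>u\<in>basis n. \<forall>v\<in>basis n.
              Lambda_bar ga \<Lambda> a A u v =
              stensor (map (\<lambda>i. savg (Gset ga (a ! i)) (\<Lambda>i i)) [0..<n]) A u v))"
proof -
  have GA: "\<forall>a. a \<noteq> (False, False) \<longrightarrow> ga a \<in> Cl1 \<and> cnd (ga a) a"
    using ga by (simp add: cnd_def)
  show ?thesis
  proof (rule conjI)
    show "\<forall>A. \<forall>u\<in>basis n. \<forall>v\<in>basis n.
           noisy_frame n \<Lambda> A u v =
           (\<Sum>a\<in>pauli_labels n. (1 / 3 ^ supp_size a) *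
               ketbra n (npauli a) (npauli a) (Lambda_bar ga \<Lambda> a A) u v)"
      using part1[OF GA] by blast
  next
    show "\<forall>\<Lambda>i :: nat \<Rightarrow> sop1 \<Rightarrow> sop1.
           (\<forall>gs\<in>ClN n. \<Lambda> gs = stensor (map (\<lambda>i. \<Lambda>i i (gs ! i)) [0..<n])) \<longrightarrow>
           (\<forall>a\<in>pauli_labels n. \<forall>A. \<forall>u\<in>basis n. \<forall>v\<in>basis n.
              Lambda_bar ga \<Lambda> a A u v =
              stensor (map (\<lambda>i. savg (Gset ga (a ! i)) (\<Lambda>i i)) [0..<n]) A u v)"
      using part2[OF GA] by blast
  qed
qed

end
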